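(* Let $x\in\mathfrak{g}=\mathfrak{gl}(n+1,\mathbb{C})$ be regular nilpotent and suppose $x\in\mathfrak{b}$ for a Borel subalgebra $\mathfrak{b}\in Q_{+,n+1}\cup Q_{-,n+1}$. Then $x_n$ is regular nilpotent in $\mathfrak{g}_n$ and $\mathfrak{z}_{\mathfrak{g}_n}(x_n)\cap\mathfrak{z}_{\mathfrak{g}}(x)=0$.
   Context: $n\ge1$. $\mathfrak{g}_n\cong\mathfrak{gl}(n,\mathbb{C})$ is embedded in $\mathfrak{g}$ as matrices supported in the upper left $n\times n$ corner, $x_n$ is the upper left $n\times n$ submatrix of $x$ (viewed in $\mathfrak{g}_n$), and $\mathfrak{z}$ denotes centralizers. $K_{n+1}=GL(n,\mathbb{C})\times GL(1,\mathbb{C})$ is the group of invertible block diagonal matrices with blocks of sizes $n$ and $1$, acting by conjugation on the flag variety $\mathcal{B}_{n+1}$ of $\mathfrak{g}$. $Q_{+,n+1}$ (resp. $Q_{-,n+1}$) is the $K_{n+1}$-orbit of the Borel subalgebra of upper (resp. lower) triangular matrices. *)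

theory Defs
  imports "HOL-Analysis.Analysis"
begin

text \<open>Conventions. gl(n+1,C) is modelled as complex^('n::{finite,linorder})^('n::{finite,linorder}) for a finite linearly
ordered index type 'n with CARD('n) = n+1 (n >= 1 means CARD('n) >= 2).
The order on 'n is the order of the standard basis; the last index
(Max UNIV) plays the role of index n+1, so g_n consists of the matrices
supported on the other indices (the upper left n x n corner).\<close>

definition last_idx :: "'n::{finite,linorder}" where
  "last_idx = Max (UNIV :: 'n set)"

text \<open>Complex dimension of a set of matrices: dimension of its span, matrices
being identified with vectors in complex^('n x 'n).\<close>
definition flat_mat :: "complex^('n::{finite,linorder})^('n::{finite,linorder}) \<Rightarrow> complex^('n \<times> 'n)" where
  "flat_mat A = (\<chi> p. A $ fst p $ snd p)"

definition cdim :: "(complex^('n::{finite,linorder})^('n::{finite,linorder})) set \<Rightarrow> nat" where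
  "cdim S = vec.dim (flat_mat ` S)"

definition centralizer :: "(complex^('n::{finite,linorder})^('n::{finite,linorder})) set \<Rightarrow> complex^('n::{finite,linorder})^('n::{finite,linorder}) \<Rightarrow> (complex^('n::{finite,linorder})^('n::{finite,linorder})) set" where
  "centralizer L a = {y \<in> L. y ** a = a ** y}"

definition mat_nilpotent :: "complex^('n::{finite,linorder})^('n::{finite,linorder}) \<Rightarrow> bool" where
  "mat_nilpotent A \<longleftrightarrow> (\<exists>k. (((**) A) ^^ k) (mat 1) = 0)"

definition gl_full :: "(complex^('n::{finite,linorder})^('n::{finite,linorder})) set" where
  "gl_full = UNIV"

definition gl_corner :: "(complex^('n::{finite,linorder})^('n::{finite,linorder})) set" where
  "gl_corner = {A. \<forall>i j. (i = last_idx \<or> j = last_idx) \<longrightarrow> A $ i $ j = 0}"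

definition corner :: "complex^('n::{finite,linorder})^('n::{finite,linorder}) \<Rightarrow> complex^('n::{finite,linorder})^('n::{finite,linorder})" where
  "corner x = (\<chi> i j. if i \<noteq> last_idx \<and> j \<noteq> last_idx then x $ i $ j else 0)"

text \<open>Regular: centralizer dimension equals the rank. rank gl(n+1) = n+1, rank gl(n) = n.\<close>
definition regular_nilpotent_g :: "complex^('n::{finite,linorder})^('n::{finite,linorder}) \<Rightarrow> bool" where
  "regular_nilpotent_g x \<longleftrightarrow> mat_nilpotent x \<and> cdim (centralizer gl_full x) = CARD('n)"

definition regular_nilpotent_gn :: "complex^('n::{finite,linorder})^('n::{finite,linorder}) \<Rightarrow> bool" where
  "regular_nilpotent_gn y \<longleftrightarrow> y \<in> gl_corner \<and> mat_nilpotent y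
      \<and> cdim (centralizer gl_corner y) = CARD('n) - 1"

text \<open>K_{n+1} = GL(n) x GL(1): invertible block diagonal matrices.\<close>
definition K_grp :: "(complex^('n::{finite,linorder})^('n::{finite,linorder})) set" where
  "K_grp = {k. invertible k \<and> (\<forall>i. i \<noteq> last_idx \<longrightarrow> k $ i $ last_idx = 0 \<and> k $ last_idx $ i = 0)}"

definition borel_upper :: "(complex^('n::{finite,linorder})^('n::{finite,linorder})) set" where
  "borel_upper = {u. \<forall>i j. j < i \<longrightarrow> u $ i $ j = 0}"

definition borel_lower :: "(complex^('n::{finite,linorder})^('n::{finite,linorder})) set" where
  "borel_lower = {u. \<forall>i j. i < j \<longrightarrow> u $ i $ j = 0}"

definition Q_plus :: "(complex^('n::{finite,linorder})^('n::{finite,linorder})) set set" where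
  "Q_plus = {(\<lambda>u. k ** u ** matrix_inv k) ` borel_upper | k. k \<in> K_grp}"

definition Q_minus :: "(complex^('n::{finite,linorder})^('n::{finite,linorder})) set set" where
  "Q_minus = {(\<lambda>u. k ** u ** matrix_inv k) ` borel_lower | k. k \<in> K_grp}"

end

theory Submission
  imports Defs
begin

definition unflat :: "complex^('n::finite\<times>'n) \<Rightarrow> complex^'n^'n" where
  "unflat v = (\<chi> i j. v $ (i,j))"

definition smat :: "complex \<Rightarrow> complex^('n::finite)^'n \<Rightarrow> complex^'n^'n" where
  "smat c A = (\<chi> i j. c * A$i$j)"

lemma flat_unflat[simp]: "flat_mat (unflat v) = v"
  by (simp add: flat_mat_def unflat_def vec_eq_iff)

lemma unflat_flat[simp]: "unflat (flat_mat A) = A"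
  by (simp add: flat_mat_def unflat_def vec_eq_iff)

lemma unflat_add: "unflat (v + w) = unflat v + unflat w"
  by (simp add: unflat_def vec_eq_iff)

lemma unflat_scale: "unflat (c *s v) = smat c (unflat v)"
  by (simp add: unflat_def smat_def vec_eq_iff)

lemma flat_smat: "flat_mat (smat c A) = c *s flat_mat A"
  by (simp add: flat_mat_def smat_def vec_eq_iff)

lemma flat_add: "flat_mat (A + B) = flat_mat A + flat_mat B"
  by (simp add: flat_mat_def vec_eq_iff)

lemma lin_of_mat:
  fixes g :: "complex^('n::{finite,linorder})^('n::{finite,linorder}) \<Rightarrow> complex^('n::{finite,linorder})^('n::{finite,linorder})"
  assumes "\<And>A B. g (A+B) = g A + g B" "\<And>c A. g (smat c A) = smat c (g A)"
  shows "Vector_Spaces.linear (*s) (*s) (\<lambda>v. flat_mat (g (unflat v)))"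
proof -
  have vs: "vector_space ((*s) :: complex \<Rightarrow> complex^('n\<times>'n) \<Rightarrow> _)" by (rule vec.vector_space_axioms)
  show ?thesis unfolding Vector_Spaces.linear_iff
    using vs by (simp add: unflat_add unflat_scale assms flat_smat flat_add)
qed

lemma cdim_image:
  fixes g :: "complex^('n::{finite,linorder})^('n::{finite,linorder}) \<Rightarrow> complex^('n::{finite,linorder})^('n::{finite,linorder})"
  assumes "\<And>A B. g (A+B) = g A + g B" "\<And>c A. g (smat c A) = smat c (g A)" "inj g"
  shows "cdim (g ` S) = cdim S"
proof -
  let ?G = "\<lambda>v. flat_mat (g (unflat v))"
  have l: "Vector_Spaces.linear (*s) (*s) ?G" by (rule lin_of_mat[OF assms(1,2)])
  have i: "inj ?G"
  proof (rule injI)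
    fix v w assume "flat_mat (g (unflat v)) = flat_mat (g (unflat w))"
    then have "unflat (flat_mat (g (unflat v))) = unflat (flat_mat (g (unflat w)))" by simp
    then have "g (unflat v) = g (unflat w)" by simp
    then have "unflat v = unflat w" using assms(3) by (simp add: inj_eq)
    then have "flat_mat (unflat v) = flat_mat (unflat w)" by simp
    then show "v = w" by simp
  qed
  have "flat_mat ` g ` S = ?G ` flat_mat ` S" by (auto simp: image_image)
  then show ?thesis unfolding cdim_def
    using vec.dim_image_eq[OF l, of "flat_mat ` S"] i by (simp add: inj_on_def inj_def)
qed

lemma span_disjoint:
  fixes C :: "('a::field^'m) set"
  assumes "vec.independent C" "B \<subseteq> C" "v \<in> vec.span B" "v \<in> vec.span (C - B)"
  shows "v = 0"
proof -
  have fC: "finite C" using assms(1) vec.finiteI_independent by blast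
  have iB: "vec.independent B" using vec.independent_mono assms by blast
  have iD: "vec.independent (C - B)" using vec.independent_mono assms by blast
  have "vec.dim {x + y |x y. x \<in> vec.span B \<and> y \<in> vec.span (C-B)} + vec.dim (vec.span B \<inter> vec.span (C-B))
        = vec.dim (vec.span B) + vec.dim (vec.span (C-B))"
    by (rule vec.dim_sums_Int) auto
  moreover have "{x + y |x y. x \<in> vec.span B \<and> y \<in> vec.span (C-B)} = vec.span C"
    using vec.span_Un[of B "C - B"] assms(2) by (simp add: Un_absorb1)
  ultimately have e1: "vec.dim (vec.span C) + vec.dim (vec.span B \<inter> vec.span (C-B))
        = vec.dim (vec.span B) + vec.dim (vec.span (C-B))" by simp
  moreover have "vec.dim (vec.span C) = card C" using assms(1) vec.dim_span_eq_card_independent by blast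
  moreover have "vec.dim (vec.span B) = card B" using iB vec.dim_span_eq_card_independent by blast
  moreover have "vec.dim (vec.span (C-B)) = card (C-B)" using iD vec.dim_span_eq_card_independent by blast
  moreover have "card C = card B + card (C - B)"
    using fC assms(2) by (metis card_Diff_subset finite_subset add_diff_inverse_nat card_mono not_less)
  ultimately have "vec.dim (vec.span B \<inter> vec.span (C-B)) = 0" by linarith
  then have "vec.span B \<inter> vec.span (C-B) \<subseteq> {0}" by simp
  then show ?thesis using assms(3,4) by blast
qed

lemma rank_nullity_le:
  fixes F :: "'a::field^'m \<Rightarrow> 'a^'k"
  assumes lin: "Vector_Spaces.linear (*s) (*s) F" and sub: "vec.subspace S"
  shows "vec.dim S \<le> vec.dim (S \<inter> {x. F x = 0}) + vec.dim (F ` S)"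
proof -
  interpret lf: Vector_Spaces.linear "(*s)" "(*s)" F by (rule lin)
  define K where "K = S \<inter> {x. F x = 0}"
  obtain B where B: "B \<subseteq> K" "vec.independent B" "K \<subseteq> vec.span B" "card B = vec.dim K"
    using vec.basis_exists[of K] by blast
  have "B \<subseteq> S" using B(1) K_def by blast
  then obtain C where C: "B \<subseteq> C" "C \<subseteq> S" "vec.independent C" "S \<subseteq> vec.span C"
    using vec.maximal_independent_subset_extend[of B S] B(2) by blast
  have fC: "finite C" using C(3) vec.finiteI_independent by blast
  have dS: "card C = vec.dim S" using vec.basis_card_eq_dim C by blast
  define D where "D = C - B"
  have cC: "card C = card B + card D"
    unfolding D_def using fC C(1) by (metis card_Diff_subset finite_subset add_diff_inverse_nat card_mono not_less)
  have spC: "vec.span C \<subseteq> S" using C(2) sub vec.span_minimal by blast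
  have inj: "inj_on F (vec.span D)"
  proof (rule inj_onI)
    fix u w assume u: "u \<in> vec.span D" and w: "w \<in> vec.span D" and e: "F u = F w"
    have uw: "u - w \<in> vec.span D" using u w vec.span_diff by blast
    have "vec.span D \<subseteq> vec.span C" unfolding D_def by (rule vec.span_mono) auto
    then have "u - w \<in> S" using uw spC by blast
    moreover have "F (u - w) = 0" using e lf.diff by simp
    ultimately have "u - w \<in> K" unfolding K_def by blast
    then have "u - w \<in> vec.span B" using B(3) by blast
    then have "u - w = 0" using span_disjoint[OF C(3) C(1)] uw unfolding D_def by blast
    then show "u = w" by simp
  qed
  have iD: "vec.independent D" unfolding D_def using vec.independent_mono C(3) by blast
  have "vec.dim (F ` D) = vec.dim D" using vec.dim_image_eq[OF lin inj] .
  also have "\<dots> = card D" using iD vec.dim_eq_card_independent by blast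
  finally have "card D = vec.dim (F ` D)" by simp
  also have "\<dots> \<le> vec.dim (F ` S)" by (rule vec.dim_subset) (use C(2) D_def in auto)
  finally show ?thesis using dS cC B(4)[unfolded K_def] by linarith
qed

lemma mat_add_rdistrib: "(A + B) ** C = A ** C + B ** (C::complex^'n::finite^'n)"
  by (vector matrix_matrix_mult_def sum.distrib[symmetric] field_simps)
lemma smat_mul_left: "x ** smat c A = smat c (x ** A)"
  by (simp add: smat_def matrix_matrix_mult_def vec_eq_iff sum_distrib_left mult_ac)
lemma smat_mul_right: "smat c A ** x = smat c (A ** x)"
  by (simp add: smat_def matrix_matrix_mult_def vec_eq_iff sum_distrib_left mult_ac)
lemma smat_diff: "smat c A - smat c B = smat c (A - B)"
  by (simp add: smat_def vec_eq_iff algebra_simps)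
lemma lin_comm:
  fixes x :: "complex^('n::{finite,linorder})^('n::{finite,linorder})"
  shows "Vector_Spaces.linear (*s) (*s) (\<lambda>v. flat_mat (x ** unflat v - unflat v ** x))"
proof (rule lin_of_mat)
  fix A B
  show "x ** (A + B) - (A + B) ** x = (x ** A - A ** x) + (x ** B - B ** x)"
    by (simp add: matrix_add_ldistrib mat_add_rdistrib)
next
  fix c A
  show "x ** smat c A - smat c A ** x = smat c (x ** A - A ** x)"
    by (simp add: smat_mul_left smat_mul_right smat_diff)
qed

lemma sum_single:
  assumes "\<And>l. l \<noteq> s \<Longrightarrow> f l = 0"
  shows "(\<Sum>l\<in>UNIV. f l) = f (s::'a::finite)"
proof -
  have "(\<Sum>l\<in>UNIV. f l) = f s + (\<Sum>l\<in>UNIV - {s}. f l)" by (simp add: sum.remove)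
  also have "(\<Sum>l\<in>UNIV - {s}. f l) = 0" using assms by (intro sum.neutral) auto
  finally show ?thesis by simp
qed

lemma mm_nz: "(A ** B)$i$j \<noteq> (0::complex) \<Longrightarrow> \<exists>l. A$i$l \<noteq> 0 \<and> B$l$j \<noteq> 0"
proof (rule ccontr)
  assume a: "(A ** B)$i$j \<noteq> 0" "\<not> (\<exists>l. A$i$l \<noteq> 0 \<and> B$l$j \<noteq> 0)"
  then have "(A ** B)$i$j = 0" by (auto simp: matrix_matrix_mult_def intro!: sum.neutral)
  then show False using a by simp
qed

lemma cyclic_core:
  fixes x y :: "complex^('n::{finite,linorder})^('n::{finite,linorder})" and I :: "'n set"
  assumes xs: "\<forall>i j. x$i$j \<noteq> 0 \<longrightarrow> i < j \<and> i \<in> I \<and> j \<in> I"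
    and sd: "\<forall>i s. i \<in> I \<longrightarrow> s \<in> I \<longrightarrow> i < s \<longrightarrow> (\<forall>k\<in>I. \<not>(i < k \<and> k < s)) \<longrightarrow> x$i$s \<noteq> 0"
    and cI: "c \<in> I" and cmax: "\<forall>k\<in>I. k \<le> c"
    and comm: "x ** y = y ** x"
    and yc: "\<forall>k. y$k$c = 0"
  shows "\<forall>i\<in>I. \<forall>k. y$k$i = 0"
proof -
  have T0: "y *v axis c 1 = 0"
  proof -
    have "(\<Sum>j\<in>UNIV. y $ i $ j * axis c 1 $ j) = y$i$c * axis c 1 $ c" for i
      by (rule sum_single) (simp add: axis_def)
    then show ?thesis using yc by (simp add: vec_eq_iff matrix_vector_mult_def)
  qed
  have Tx: "y *v (x *v w) = 0" if "y *v w = 0" for w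
  proof -
    have "y *v (x *v w) = (y ** x) *v w" by (simp add: matrix_vector_mul_assoc)
    also have "\<dots> = (x ** y) *v w" using comm by simp
    also have "\<dots> = x *v (y *v w)" by (simp add: matrix_vector_mul_assoc)
    finally show ?thesis using that by simp
  qed
  define P where "P i \<longleftrightarrow> (\<exists>w. y *v w = 0 \<and> w$i \<noteq> 0 \<and> (\<forall>k. i < k \<longrightarrow> w$k = 0) \<and> (\<forall>k. k \<notin> I \<longrightarrow> w$k = 0))" for i
  have ph1: "\<forall>i. i \<in> I \<longrightarrow> card {k\<in>I. i<k} = n \<longrightarrow> P i" for n
  proof (induction n rule: less_induct)
    case (less n)
    show ?case
    proof (intro allI impI)
      fix i assume iI: "i \<in> I" and cn: "card {k\<in>I. i<k} = n"
      show "P i"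
      proof (cases "{k\<in>I. i<k} = {}")
        case True
        then have "i = c" using cI cmax iI by (metis (mono_tags, lifting) empty_Collect_eq order.not_eq_order_implies_strict)
        then show ?thesis unfolding P_def
          by (intro exI[of _ "axis c 1"]) (use T0 cI in \<open>auto simp: axis_def\<close>)
      next
        case False
        define s where "s = Min {k\<in>I. i<k}"
        have fin: "finite {k\<in>I. i<k}" by simp
        have sin: "s \<in> {k\<in>I. i<k}" unfolding s_def using False fin Min_in by blast
        then have sI: "s \<in> I" and isl: "i < s" by auto
        have smin: "\<And>k. k \<in> I \<Longrightarrow> i < k \<Longrightarrow> s \<le> k" unfolding s_def using fin by auto
        have sub: "{k\<in>I. s<k} \<subset> {k\<in>I. i<k}" using sin isl by auto
        then have "card {k\<in>I. s<k} < n" using cn fin by (metis psubset_card_mono)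
        then have "P s" using less.IH sI by blast
        then obtain w where w: "y *v w = 0" "w$s \<noteq> 0" "\<forall>k. s < k \<longrightarrow> w$k = 0" "\<forall>k. k \<notin> I \<longrightarrow> w$k = 0"
          unfolding P_def by blast
        define v where "v = x *v w"
        have v0: "y *v v = 0" unfolding v_def by (rule Tx[OF w(1)])
        have vk: "v$k = 0" if "i < k \<or> k \<notin> I" for k
        proof -
          have "v$k = (\<Sum>l\<in>UNIV. x$k$l * w$l)" unfolding v_def by (simp add: matrix_vector_mult_def)
          also have "\<dots> = 0"
          proof (rule sum.neutral, rule ballI)
            fix l
            show "x$k$l * w$l = 0"
            proof (rule ccontr)
              assume "x$k$l * w$l \<noteq> 0"
              then have a: "x$k$l \<noteq> 0" "w$l \<noteq> 0" by auto
              then have "k < l" "k \<in> I" "l \<in> I" using xs by auto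
              moreover have "l \<le> s" using a(2) w(3) not_le by blast
              ultimately show False using that smin[of k] by force
            qed
          qed
          finally show ?thesis .
        qed
        have vi: "v$i = x$i$s * w$s"
        proof -
          have "v$i = (\<Sum>l\<in>UNIV. x$i$l * w$l)" unfolding v_def by (simp add: matrix_vector_mult_def)
          also have "\<dots> = x$i$s * w$s"
          proof (rule sum_single)
            fix l assume ls: "l \<noteq> s"
            show "x$i$l * w$l = 0"
            proof (rule ccontr)
              assume "x$i$l * w$l \<noteq> 0"
              then have a: "x$i$l \<noteq> 0" "w$l \<noteq> 0" by auto
              then have "i < l" "l \<in> I" using xs by auto
              then have "s \<le> l" using smin by blast
              moreover have "l \<le> s" using a(2) w(3) not_le by blast
              ultimately show False using ls by simp
            qed
          qed
          finally show ?thesis .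
        qed
        have "x$i$s \<noteq> 0"
          using sd iI sI isl smin by (meson leD)
        then have "v$i \<noteq> 0" using vi w(2) by simp
        then show ?thesis unfolding P_def using v0 vk by blast
      qed
    qed
  qed
  have P: "P i" if "i \<in> I" for i using ph1 that by blast
  have ph2: "\<forall>i. i \<in> I \<longrightarrow> card {k\<in>I. k<i} = n \<longrightarrow> (\<forall>k. y$k$i = 0)" for n
  proof (induction n rule: less_induct)
    case (less n)
    show ?case
    proof (intro allI impI)
      fix i k assume iI: "i \<in> I" and cn: "card {k\<in>I. k<i} = n"
      obtain w where w: "y *v w = 0" "w$i \<noteq> 0" "\<forall>k. i < k \<longrightarrow> w$k = 0" "\<forall>k. k \<notin> I \<longrightarrow> w$k = 0"
        using P[OF iI] unfolding P_def by blast
      have "0 = (y *v w)$k" using w(1) by simp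
      also have "\<dots> = (\<Sum>l\<in>UNIV. y$k$l * w$l)" by (simp add: matrix_vector_mult_def)
      also have "\<dots> = y$k$i * w$i"
      proof (rule sum_single)
        fix l assume li: "l \<noteq> i"
        show "y$k$l * w$l = 0"
        proof (cases "i < l \<or> l \<notin> I")
          case True then show ?thesis using w by auto
        next
          case False
          then have lI: "l \<in> I" and "l < i" using li by auto
          then have "{k\<in>I. k<l} \<subset> {k\<in>I. k<i}" using iI by auto
          then have "card {k\<in>I. k<l} < n" using cn by (metis psubset_card_mono finite_subset subset_UNIV finite)
          then have "y$k$l = 0" using less.IH lI by blast
          then show ?thesis by simp
        qed
      qed
      finally show "y$k$i = 0" using w(2) by simp
    qed
  qed
  show ?thesis using ph2 by blast
qed

lemma unflat_zero: "unflat 0 = 0"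
  by (simp add: unflat_def vec_eq_iff)

lemma centralizer_lb:
  fixes x :: "complex^('n::{finite,linorder})^('n::{finite,linorder})" and I :: "'n set" and E :: "('n\<times>'n) set"
  assumes xs: "\<forall>i j. x$i$j \<noteq> 0 \<longrightarrow> i < j \<and> i \<in> I \<and> j \<in> I"
    and E: "E \<subseteq> {p. fst p < snd p \<and> fst p \<in> I \<and> snd p \<in> I}"
    and Ez: "\<forall>y. (\<forall>i j. y$i$j \<noteq> 0 \<longrightarrow> i \<le> j \<and> i \<in> I \<and> j \<in> I) \<longrightarrow> (\<forall>p\<in>E. (x**y - y**x) $ fst p $ snd p = 0)"
  shows "card I + card E \<le> cdim {y. (\<forall>i j. y$i$j \<noteq> 0 \<longrightarrow> i \<in> I \<and> j \<in> I) \<and> y ** x = x ** y}"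
proof -
  define C where "C = {y. (\<forall>i j. y$i$j \<noteq> 0 \<longrightarrow> i \<in> I \<and> j \<in> I) \<and> y ** x = x ** y}"
  define Dg where "Dg = {p::'n\<times>'n. fst p = snd p \<and> fst p \<in> I}"
  define St where "St = {p::'n\<times>'n. fst p < snd p \<and> fst p \<in> I \<and> snd p \<in> I}"
  define D where "D = {p::'n\<times>'n. fst p \<le> snd p \<and> fst p \<in> I \<and> snd p \<in> I}"
  define T where "T = St - E"
  define S where "S = {v::complex^('n\<times>'n). \<forall>p. p \<notin> D \<longrightarrow> v$p = 0}"
  define S' where "S' = {v::complex^('n\<times>'n). \<forall>p. p \<notin> T \<longrightarrow> v$p = 0}"
  define F where "F = (\<lambda>v. flat_mat (x ** unflat v - unflat v ** x))"
  have lin: "Vector_Spaces.linear (*s) (*s) F"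
    unfolding F_def by (rule lin_comm)
  have sub: "vec.subspace S"
    unfolding S_def vec.subspace_def by auto
  have dS: "vec.dim S = card D" unfolding S_def using dim_substandard_cart by blast
  have dS': "vec.dim S' = card T" unfolding S'_def using dim_substandard_cart by blast
  have img: "F ` S \<subseteq> S'"
  proof
    fix w assume "w \<in> F ` S"
    then obtain v where v: "v \<in> S" and w: "w = F v" by blast
    define y where "y = unflat v"
    have yu: "\<forall>i j. y$i$j \<noteq> 0 \<longrightarrow> i \<le> j \<and> i \<in> I \<and> j \<in> I"
      using v unfolding S_def D_def y_def unflat_def by auto
    have "\<forall>p. p \<notin> T \<longrightarrow> w$p = 0"
    proof (intro allI impI)
      fix p assume pT: "p \<notin> T"
      obtain i j where p: "p = (i,j)" by fastforce
      show "w$p = 0"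
      proof (rule ccontr)
        assume nz: "w$p \<noteq> 0"
        then have nz': "(x ** y - y ** x)$i$j \<noteq> 0" using w p unfolding F_def flat_mat_def y_def by simp
        have "(x ** y)$i$j \<noteq> 0 \<or> (y ** x)$i$j \<noteq> 0" using nz' by auto
        then have "i < j \<and> i \<in> I \<and> j \<in> I"
        proof
          assume "(x ** y)$i$j \<noteq> 0"
          then obtain l where "x$i$l \<noteq> 0" "y$l$j \<noteq> 0" using mm_nz by blast
          then show ?thesis using xs yu by fastforce
        next
          assume "(y ** x)$i$j \<noteq> 0"
          then obtain l where "y$i$l \<noteq> 0" "x$l$j \<noteq> 0" using mm_nz by blast
          then show ?thesis using xs yu by fastforce
        qed
        moreover have "(i,j) \<notin> E" using Ez yu nz' by force
        ultimately have "p \<in> T" unfolding T_def St_def p by simp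
        then show False using pT by simp
      qed
    qed
    then show "w \<in> S'" unfolding S'_def by simp
  qed
  have ker: "S \<inter> {v. F v = 0} \<subseteq> flat_mat ` C"
  proof
    fix v assume v: "v \<in> S \<inter> {v. F v = 0}"
    define y where "y = unflat v"
    have "flat_mat (x ** y - y ** x) = 0" using v unfolding F_def y_def by simp
    then have "x ** y - y ** x = unflat 0" by (metis unflat_flat)
    also have "\<dots> = 0" by (rule unflat_zero)
    finally have "x ** y - y ** x = 0" .
    then have c: "y ** x = x ** y" by simp
    have "\<forall>i j. y$i$j \<noteq> 0 \<longrightarrow> i \<in> I \<and> j \<in> I"
      using v unfolding S_def D_def y_def unflat_def by auto
    then have "y \<in> C" using c unfolding C_def by simp
    moreover have "v = flat_mat y" unfolding y_def by simp
    ultimately show "v \<in> flat_mat ` C" by blast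
  qed
  have "card D \<le> vec.dim (S \<inter> {v. F v = 0}) + vec.dim (F ` S)"
    using rank_nullity_le[OF lin sub] dS by simp
  also have "\<dots> \<le> cdim C + card T"
    using vec.dim_subset[OF ker] vec.dim_subset[OF img] dS' unfolding cdim_def by linarith
  finally have main: "card D \<le> cdim C + card T" .
  have fin: "finite St" "finite Dg" "finite E" using E finite_subset unfolding St_def by auto
  have "D = Dg \<union> St" unfolding D_def Dg_def St_def by auto
  moreover have "Dg \<inter> St = {}" unfolding Dg_def St_def by auto
  ultimately have cD: "card D = card Dg + card St" using fin by (simp add: card_Un_disjoint)
  have "Dg = (\<lambda>i. (i,i)) ` I" unfolding Dg_def by force
  then have cDg: "card Dg = card I" by (simp add: card_image inj_on_def)
  have cT: "card T = card St - card E" unfolding T_def using E fin St_def by (simp add: card_Diff_subset)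
  have "card E \<le> card St" using E fin St_def by (simp add: card_mono)
  then show ?thesis using main cD cDg cT unfolding C_def by linarith
qed

abbreviation pw :: "complex^('n::{finite,linorder})^('n::{finite,linorder}) \<Rightarrow> nat \<Rightarrow> complex^('n::{finite,linorder})^('n::{finite,linorder})" where
  "pw A m \<equiv> (((**) A) ^^ m) (mat 1)"

lemma pw_Suc: "pw A (Suc m) = A ** pw A m" by simp

lemma pw_Suc': "pw A (Suc m) = pw A m ** A"
proof (induction m)
  case 0 then show ?case by simp
next
  case (Suc m)
  have "pw A (Suc (Suc m)) = A ** pw A (Suc m)" by simp
  also have "\<dots> = A ** (pw A m ** A)" using Suc by simp
  also have "\<dots> = (A ** pw A m) ** A" by (simp add: matrix_mul_assoc)
  finally show ?case by simp
qed

lemma pw_conj: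
  assumes "k ** ki = mat 1" "ki ** k = mat 1"
  shows "pw (k ** u ** ki) m = k ** pw u m ** ki"
proof (induction m)
  case 0 then show ?case using assms by simp
next
  case (Suc m)
  have "pw (k ** u ** ki) (Suc m) = (k ** u ** ki) ** (k ** pw u m ** ki)" using Suc by simp
  also have "\<dots> = k ** u ** (ki ** k) ** pw u m ** ki" by (simp add: matrix_mul_assoc)
  also have "\<dots> = k ** (u ** pw u m) ** ki" using assms(2) by (simp add: matrix_mul_assoc)
  finally show ?case by simp
qed

lemma nilp_conj:
  assumes "k ** ki = mat 1" "ki ** k = mat 1" "mat_nilpotent u"
  shows "mat_nilpotent (k ** u ** ki)"
  using assms pw_conj[OF assms(1,2)] unfolding mat_nilpotent_def by (metis times0_left times0_right)

lemma pw_transpose: "pw (transpose A) m = transpose (pw A m)"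
proof (induction m)
  case 0 then show ?case by simp
next
  case (Suc m)
  have "pw (transpose A) (Suc m) = transpose A ** transpose (pw A m)" using Suc by simp
  also have "\<dots> = transpose (pw A m ** A)" by (simp add: matrix_transpose_mul)
  also have "\<dots> = transpose (pw A (Suc m))" using pw_Suc' by metis
  finally show ?case .
qed

lemma transpose_zero: "transpose (0::'a::zero^'n^'m) = 0"
  by (simp add: transpose_def vec_eq_iff)

lemma nilp_transpose: "mat_nilpotent (transpose A) \<longleftrightarrow> mat_nilpotent A"
  unfolding mat_nilpotent_def pw_transpose
  by (metis transpose_transpose transpose_zero)

lemma mat1_entry: "(mat 1 :: complex^'n^'n) $ i $ j = (if i = j then 1 else 0)"
  by (simp add: mat_def)

lemma up_pow:
  assumes u: "\<forall>i j. j < i \<longrightarrow> u$i$j = 0"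
  shows "(\<forall>i j. j < i \<longrightarrow> pw u m $i$j = 0) \<and> (\<forall>i. pw u m $i$i = (u$i$i)^m)"
proof (induction m)
  case 0 then show ?case by (simp add: mat1_entry)
next
  case (Suc m)
  have lo: "pw u (Suc m) $i$j = 0" if ji: "j < i" for i j
  proof -
    have "pw u (Suc m) $i$j = (\<Sum>l\<in>UNIV. u$i$l * pw u m $l$j)" by (simp add: matrix_matrix_mult_def)
    also have "\<dots> = 0"
    proof (rule sum.neutral, rule ballI)
      fix l
      show "u$i$l * pw u m $l$j = 0"
      proof (cases "l < i")
        case True then show ?thesis using u by simp
      next
        case False then have "j < l" using ji by simp
        then show ?thesis using Suc by simp
      qed
    qed
    finally show ?thesis .
  qed
  have di: "pw u (Suc m) $i$i = (u$i$i)^(Suc m)" for i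
  proof -
    have "pw u (Suc m) $i$i = (\<Sum>l\<in>UNIV. u$i$l * pw u m $l$i)" by (simp add: matrix_matrix_mult_def)
    also have "\<dots> = u$i$i * pw u m $i$i"
    proof (rule sum_single)
      fix l assume "l \<noteq> i"
      then have "l < i \<or> i < l" by auto
      then show "u$i$l * pw u m $l$i = 0" using u Suc by auto
    qed
    finally show ?thesis using Suc by simp
  qed
  show ?case using lo di by blast
qed

lemma up_nilp_diag:
  assumes u: "\<forall>i j. j < i \<longrightarrow> u$i$j = 0" and n: "mat_nilpotent u"
  shows "u$i$i = 0"
proof -
  obtain m where "pw u m = 0" using n unfolding mat_nilpotent_def by blast
  then have "(u$i$i)^m = 0" using up_pow[OF u, of m] by (metis zero_index)
  then show ?thesis by simp
qed

lemma strict_pow: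
  assumes A: "\<forall>i j. A$i$j \<noteq> 0 \<longrightarrow> i < j"
  shows "pw A m $i$j \<noteq> 0 \<Longrightarrow> i \<le> j \<and> m \<le> card {k. i < k \<and> k \<le> j}"
proof (induction m arbitrary: i)
  case 0 then show ?case by (simp add: mat1_entry split: if_splits)
next
  case (Suc m)
  have "(A ** pw A m)$i$j \<noteq> 0" using Suc.prems by simp
  then obtain l where l: "A$i$l \<noteq> 0" "pw A m $l$j \<noteq> 0" using mm_nz by blast
  have il: "i < l" using A l(1) by blast
  have lj: "l \<le> j" and c: "m \<le> card {k. l < k \<and> k \<le> j}" using Suc.IH l(2) by auto
  have "insert l {k. l < k \<and> k \<le> j} \<subseteq> {k. i < k \<and> k \<le> j}" using il lj by auto
  then have "card (insert l {k. l < k \<and> k \<le> j}) \<le> card {k. i < k \<and> k \<le> j}" by (intro card_mono) auto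
  moreover have "card (insert l {k. l < k \<and> k \<le> j}) = Suc (card {k. l < k \<and> k \<le> j})" by simp
  ultimately show ?case using il lj c by simp
qed

lemma strict_nilp:
  fixes A :: "complex^('n::{finite,linorder})^('n::{finite,linorder})"
  assumes A: "\<forall>i j. A$i$j \<noteq> 0 \<longrightarrow> i < j"
  shows "mat_nilpotent A"
proof -
  have "pw A CARD('n) $i$j = 0" for i j
  proof (rule ccontr)
    assume "pw A CARD('n) $i$j \<noteq> 0"
    then have c: "CARD('n) \<le> card {k. i < k \<and> k \<le> j}" using strict_pow[OF A] by blast
    have "{k. i < k \<and> k \<le> j} \<subseteq> UNIV - {i}" by auto
    then have "card {k. i < k \<and> k \<le> j} \<le> card (UNIV - {i})" by (intro card_mono) auto
    also have "\<dots> < CARD('n)" by (simp add: card_Diff_singleton)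
    finally show False using c by simp
  qed
  then have "pw A CARD('n) = 0" by (simp add: vec_eq_iff)
  then show ?thesis unfolding mat_nilpotent_def by blast
qed

definition Pm :: "complex^('n::{finite,linorder})^('n::{finite,linorder})" where
  "Pm = (\<chi> i j. if i = j \<and> i \<noteq> last_idx then 1 else 0)"

lemma Pm_left: "(Pm ** A)$i$j = (if i \<noteq> last_idx then A$i$j else 0)"
proof -
  have "(Pm ** A)$i$j = (\<Sum>l\<in>UNIV. Pm$i$l * A$l$j)" by (simp add: matrix_matrix_mult_def)
  also have "\<dots> = Pm$i$i * A$i$j" by (rule sum_single) (simp add: Pm_def)
  finally show ?thesis by (simp add: Pm_def)
qed

lemma Pm_right: "(A ** Pm)$i$j = (if j \<noteq> last_idx then A$i$j else 0)"
proof -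
  have "(A ** Pm)$i$j = (\<Sum>l\<in>UNIV. A$i$l * Pm$l$j)" by (simp add: matrix_matrix_mult_def)
  also have "\<dots> = A$i$j * Pm$j$j" by (rule sum_single) (simp add: Pm_def)
  finally show ?thesis by (simp add: Pm_def)
qed

lemma corner_Pm: "corner A = Pm ** A ** Pm"
  by (simp add: vec_eq_iff corner_def Pm_left Pm_right)

definition blk :: "complex^('n::{finite,linorder})^('n::{finite,linorder}) \<Rightarrow> bool" where
  "blk k \<longleftrightarrow> (\<forall>i. i \<noteq> last_idx \<longrightarrow> k $ i $ last_idx = 0 \<and> k $ last_idx $ i = 0)"

lemma blk_comm: "blk k \<Longrightarrow> k ** Pm = Pm ** k"
  unfolding blk_def by (auto simp: vec_eq_iff Pm_left Pm_right)

lemma corner_conj: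
  assumes "blk k" "blk ki"
  shows "corner (k ** u ** ki) = k ** corner u ** ki"
proof -
  have "corner (k ** u ** ki) = Pm ** k ** u ** ki ** Pm" by (simp add: corner_Pm matrix_mul_assoc)
  also have "\<dots> = k ** Pm ** u ** (ki ** Pm)" using blk_comm[OF assms(1)] by (simp add: matrix_mul_assoc)
  also have "\<dots> = k ** Pm ** u ** Pm ** ki" using blk_comm[OF assms(2)] by (simp add: matrix_mul_assoc)
  also have "\<dots> = k ** corner u ** ki" by (simp add: corner_Pm matrix_mul_assoc)
  finally show ?thesis .
qed

lemma gl_corner_iff: "A \<in> gl_corner \<longleftrightarrow> corner A = A"
  unfolding gl_corner_def corner_def by (auto simp: vec_eq_iff)

lemma corner_in: "corner A \<in> gl_corner"
  unfolding gl_corner_def corner_def by auto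

lemma blk_inv:
  assumes k: "blk k" and e1: "k ** ki = mat 1" and e2: "ki ** k = mat 1"
  shows "blk ki"
proof -
  let ?L = "last_idx :: 'a"
  have "(k ** ki)$?L$?L = (\<Sum>b\<in>UNIV. k$?L$b * ki$b$?L)" by (simp add: matrix_matrix_mult_def)
  also have "\<dots> = k$?L$?L * ki$?L$?L" by (rule sum_single) (use k in \<open>auto simp: blk_def\<close>)
  finally have "k$?L$?L * ki$?L$?L = 1" using e1 by (simp add: mat1_entry)
  then have kL: "k$?L$?L \<noteq> 0" by auto
  have "ki$i$?L = 0 \<and> ki$?L$i = 0" if iL: "i \<noteq> ?L" for i
  proof
    have "(ki ** k)$i$?L = (\<Sum>b\<in>UNIV. ki$i$b * k$b$?L)" by (simp add: matrix_matrix_mult_def)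
    also have "\<dots> = ki$i$?L * k$?L$?L" by (rule sum_single) (use k in \<open>auto simp: blk_def\<close>)
    finally have "ki$i$?L * k$?L$?L = 0" using e2 iL by (simp add: mat1_entry)
    then show "ki$i$?L = 0" using kL by simp
    have "(k ** ki)$?L$i = (\<Sum>b\<in>UNIV. k$?L$b * ki$b$i)" by (simp add: matrix_matrix_mult_def)
    also have "\<dots> = k$?L$?L * ki$?L$i" by (rule sum_single) (use k in \<open>auto simp: blk_def\<close>)
    finally have "k$?L$?L * ki$?L$i = 0" using e1 iL by (simp add: mat1_entry)
    then show "ki$?L$i = 0" using kL by simp
  qed
  then show ?thesis unfolding blk_def by blast
qed

lemma corner_transpose: "corner (transpose A) = transpose (corner A)"
  by (simp add: vec_eq_iff corner_def transpose_def)

lemma gl_corner_transpose: "transpose A \<in> gl_corner \<longleftrightarrow> A \<in> gl_corner"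
  unfolding gl_corner_def by (auto simp: transpose_def)

lemma cent_transpose:
  assumes "\<And>A. transpose A \<in> L \<longleftrightarrow> A \<in> L"
  shows "centralizer L (transpose a) = transpose ` centralizer L a"
proof
  show "centralizer L (transpose a) \<subseteq> transpose ` centralizer L a"
  proof
    fix y assume y: "y \<in> centralizer L (transpose a)"
    then have "transpose y \<in> L" "y ** transpose a = transpose a ** y" using assms unfolding centralizer_def by auto
    then have "transpose y \<in> L" "transpose y ** a = a ** transpose y"
      by (metis matrix_transpose_mul transpose_transpose)+
    then have "transpose y \<in> centralizer L a" unfolding centralizer_def by simp
    then show "y \<in> transpose ` centralizer L a" by (metis image_eqI transpose_transpose)
  qed
next
  show "transpose ` centralizer L a \<subseteq> centralizer L (transpose a)"
  proof
    fix z assume "z \<in> transpose ` centralizer L a"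
    then obtain y where y: "y \<in> centralizer L a" and z: "z = transpose y" by blast
    then have "y \<in> L" "y ** a = a ** y" unfolding centralizer_def by auto
    then have "z \<in> L" "z ** transpose a = transpose a ** z" using assms z
      by (auto simp: matrix_transpose_mul[symmetric])
    then show "z \<in> centralizer L (transpose a)" unfolding centralizer_def by simp
  qed
qed

lemma conj_comm_iff:
  assumes e1: "k ** ki = mat 1" and e2: "ki ** k = mat 1"
  shows "z ** (k ** a ** ki) = (k ** a ** ki) ** z \<longleftrightarrow> (ki ** z ** k) ** a = a ** (ki ** z ** k)"
proof
  assume h: "z ** (k ** a ** ki) = (k ** a ** ki) ** z"
  have "(ki ** z ** k) ** a = ki ** (z ** (k ** a ** ki)) ** k"
    by (simp add: matrix_mul_assoc) (metis e2 matrix_mul_assoc matrix_mul_rid)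
  also have "\<dots> = ki ** ((k ** a ** ki) ** z) ** k" using h by simp
  also have "\<dots> = a ** (ki ** z ** k)"
    by (simp add: matrix_mul_assoc) (metis e2 matrix_mul_assoc matrix_mul_lid)
  finally show "(ki ** z ** k) ** a = a ** (ki ** z ** k)" .
next
  assume h: "(ki ** z ** k) ** a = a ** (ki ** z ** k)"
  have "z ** (k ** a ** ki) = k ** ((ki ** z ** k) ** a) ** ki"
    by (simp add: matrix_mul_assoc) (metis e1 matrix_mul_assoc matrix_mul_lid matrix_mul_rid)
  also have "\<dots> = k ** (a ** (ki ** z ** k)) ** ki" using h by simp
  also have "\<dots> = (k ** a ** ki) ** z"
    by (simp add: matrix_mul_assoc) (metis e1 matrix_mul_assoc matrix_mul_lid matrix_mul_rid)
  finally show "z ** (k ** a ** ki) = (k ** a ** ki) ** z" .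
qed

lemma transpose_add': "transpose (A + B) = transpose A + transpose (B::complex^'n::finite^'n)"
  by (simp add: vec_eq_iff transpose_def)

lemma transpose_smat: "transpose (smat c A) = smat c (transpose A)"
  by (simp add: vec_eq_iff transpose_def smat_def)

lemma cdim_transpose: "cdim (transpose ` S) = cdim S"
  by (rule cdim_image) (auto simp: transpose_add' transpose_smat inj_def)

lemma conj_cancel:
  fixes k ki :: "complex^('n::{finite,linorder})^('n::{finite,linorder})"
  assumes "k ** ki = mat 1" "ki ** k = mat 1"
  shows "ki ** (k ** y ** ki) ** k = y" "k ** (ki ** y ** k) ** ki = y"
  using assms by (simp_all add: matrix_mul_assoc) (metis matrix_mul_assoc matrix_mul_lid matrix_mul_rid)+

lemma cdim_conj:
  fixes k ki :: "complex^('n::{finite,linorder})^('n::{finite,linorder})"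
  assumes e1: "k ** ki = mat 1" and e2: "ki ** k = mat 1"
  shows "cdim ((\<lambda>y. k ** y ** ki) ` S) = cdim S"
proof (rule cdim_image)
  show "k ** (A + B) ** ki = k ** A ** ki + k ** B ** ki" for A B
    by (simp add: matrix_add_ldistrib mat_add_rdistrib)
  show "k ** smat c A ** ki = smat c (k ** A ** ki)" for c A
    by (simp add: smat_mul_left smat_mul_right)
  show "inj (\<lambda>y. k ** y ** ki)"
    by (rule injI) (metis conj_cancel(1)[OF e1 e2])
qed

lemma cent_conj:
  fixes k ki :: "complex^('n::{finite,linorder})^('n::{finite,linorder})"
  assumes e1: "k ** ki = mat 1" and e2: "ki ** k = mat 1"
    and c1: "\<And>A. A \<in> L \<Longrightarrow> k ** A ** ki \<in> L" and c2: "\<And>A. A \<in> L \<Longrightarrow> ki ** A ** k \<in> L"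
  shows "centralizer L (k ** a ** ki) = (\<lambda>y. k ** y ** ki) ` centralizer L a"
proof
  show "centralizer L (k ** a ** ki) \<subseteq> (\<lambda>y. k ** y ** ki) ` centralizer L a"
  proof
    fix z assume "z \<in> centralizer L (k ** a ** ki)"
    then have z: "z \<in> L" "z ** (k ** a ** ki) = (k ** a ** ki) ** z" unfolding centralizer_def by auto
    have "ki ** z ** k \<in> centralizer L a"
      using z c2 conj_comm_iff[OF e1 e2] unfolding centralizer_def by auto
    moreover have "z = k ** (ki ** z ** k) ** ki" using conj_cancel(2)[OF e1 e2] by simp
    ultimately show "z \<in> (\<lambda>y. k ** y ** ki) ` centralizer L a" by blast
  qed
next
  show "(\<lambda>y. k ** y ** ki) ` centralizer L a \<subseteq> centralizer L (k ** a ** ki)"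
  proof
    fix z assume "z \<in> (\<lambda>y. k ** y ** ki) ` centralizer L a"
    then obtain y where y: "y \<in> L" "y ** a = a ** y" and z: "z = k ** y ** ki"
      unfolding centralizer_def by auto
    have "ki ** z ** k = y" using z conj_cancel(1)[OF e1 e2] by simp
    then have "z ** (k ** a ** ki) = (k ** a ** ki) ** z" using conj_comm_iff[OF e1 e2, of z a] y by simp
    then show "z \<in> centralizer L (k ** a ** ki)" using c1 y z unfolding centralizer_def by simp
  qed
qed

lemma reg_g_conj:
  fixes k ki :: "complex^('n::{finite,linorder})^('n::{finite,linorder})"
  assumes e1: "k ** ki = mat 1" and e2: "ki ** k = mat 1"
    and r: "regular_nilpotent_g (k ** u ** ki)"
  shows "regular_nilpotent_g u"
proof -
  have "mat_nilpotent (ki ** (k ** u ** ki) ** k)"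
    using r nilp_conj[OF e2 e1] unfolding regular_nilpotent_g_def by blast
  then have n: "mat_nilpotent u" using conj_cancel(1)[OF e1 e2] by simp
  have "centralizer gl_full (k ** u ** ki) = (\<lambda>y. k ** y ** ki) ` centralizer gl_full u"
    by (rule cent_conj[OF e1 e2]) (auto simp: gl_full_def)
  then have "cdim (centralizer gl_full u) = cdim (centralizer gl_full (k ** u ** ki))"
    using cdim_conj[OF e1 e2] by simp
  then show ?thesis using r n unfolding regular_nilpotent_g_def by simp
qed

lemma reg_gn_conj:
  fixes k ki :: "complex^('n::{finite,linorder})^('n::{finite,linorder})"
  assumes e1: "k ** ki = mat 1" and e2: "ki ** k = mat 1" and b1: "blk k" and b2: "blk ki"
    and r: "regular_nilpotent_gn (corner u)"
  shows "regular_nilpotent_gn (corner (k ** u ** ki))"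
proof -
  have cc: "corner (k ** u ** ki) = k ** corner u ** ki" by (rule corner_conj[OF b1 b2])
  have n: "mat_nilpotent (k ** corner u ** ki)"
    using r nilp_conj[OF e1 e2] unfolding regular_nilpotent_gn_def by blast
  have cl1: "k ** A ** ki \<in> gl_corner" if "A \<in> gl_corner" for A
    using that corner_conj[OF b1 b2, of A] by (simp add: gl_corner_iff)
  have cl2: "ki ** A ** k \<in> gl_corner" if "A \<in> gl_corner" for A
    using that corner_conj[OF b2 b1, of A] by (simp add: gl_corner_iff)
  have "centralizer gl_corner (k ** corner u ** ki) = (\<lambda>y. k ** y ** ki) ` centralizer gl_corner (corner u)"
    by (rule cent_conj[OF e1 e2 cl1 cl2])
  then have "cdim (centralizer gl_corner (k ** corner u ** ki)) = cdim (centralizer gl_corner (corner u))"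
    using cdim_conj[OF e1 e2] by simp
  then show ?thesis using r n cc cl1[OF corner_in] unfolding regular_nilpotent_gn_def by simp
qed

lemma reg_g_transpose:
  assumes r: "regular_nilpotent_g u"
  shows "regular_nilpotent_g (transpose u)"
proof -
  have "centralizer gl_full (transpose u) = transpose ` centralizer gl_full u"
    by (rule cent_transpose) (simp add: gl_full_def)
  then show ?thesis using r cdim_transpose nilp_transpose unfolding regular_nilpotent_g_def by metis
qed

lemma reg_gn_transpose:
  assumes r: "regular_nilpotent_gn v"
  shows "regular_nilpotent_gn (transpose v)"
proof -
  have "centralizer gl_corner (transpose v) = transpose ` centralizer gl_corner v"
    by (rule cent_transpose) (rule gl_corner_transpose)
  then show ?thesis using r cdim_transpose nilp_transpose gl_corner_transpose
    unfolding regular_nilpotent_gn_def by metis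
qed

lemma mat_sub_rdistrib: "(A - B) ** C = A ** C - B ** (C::complex^'n::finite^'n)"
  by (simp add: matrix_matrix_mult_def vec_eq_iff left_diff_distrib sum_subtractf)

lemma mat_sub_ldistrib: "C ** (A - B) = C ** A - C ** (B::complex^'n::finite^'n)"
  by (simp add: matrix_matrix_mult_def vec_eq_iff right_diff_distrib sum_subtractf)

lemma cent_sub_flat:
  fixes a :: "complex^('n::{finite,linorder})^('n::{finite,linorder})"
  shows "vec.subspace (flat_mat ` centralizer gl_corner a)"
proof -
  let ?C = "centralizer gl_corner a"
  have z: "0 \<in> ?C" unfolding centralizer_def gl_corner_def by simp
  have add: "y1 + y2 \<in> ?C" if "y1 \<in> ?C" "y2 \<in> ?C" for y1 y2
    using that unfolding centralizer_def gl_corner_def by (auto simp: matrix_add_ldistrib mat_add_rdistrib)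
  have sc: "smat c y \<in> ?C" if "y \<in> ?C" for c y
    using that unfolding centralizer_def gl_corner_def by (auto simp: smat_mul_left smat_mul_right) (auto simp: smat_def)
  have f0: "flat_mat (0::complex^('n::{finite,linorder})^('n::{finite,linorder})) = 0" by (simp add: flat_mat_def vec_eq_iff)
  show ?thesis unfolding vec.subspace_def
  proof (intro conjI ballI allI)
    show "0 \<in> flat_mat ` ?C" using z f0 by (metis image_eqI)
  next
    fix v w assume "v \<in> flat_mat ` ?C" "w \<in> flat_mat ` ?C"
    then obtain y1 y2 where "y1 \<in> ?C" "y2 \<in> ?C" "v = flat_mat y1" "w = flat_mat y2" by blast
    then show "v + w \<in> flat_mat ` ?C" using add flat_add by (metis image_eqI)
  next
    fix c v assume "v \<in> flat_mat ` ?C"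
    then obtain y where "y \<in> ?C" "v = flat_mat y" by blast
    then show "c *s v \<in> flat_mat ` ?C" using sc flat_smat by (metis image_eqI)
  qed
qed

lemma upper_main:
  fixes u :: "complex^('n::{finite,linorder})^('n::{finite,linorder})"
  assumes N2: "CARD('n) \<ge> 2" and up: "u \<in> borel_upper" and r: "regular_nilpotent_g u"
  shows "regular_nilpotent_gn (corner u) \<and> (\<forall>y::complex^('n::{finite,linorder})^('n::{finite,linorder}). y \<in> gl_corner \<longrightarrow> y ** u = u ** y \<longrightarrow> y = 0)"
proof -
  have ul: "\<forall>i j. j < i \<longrightarrow> u$i$j = 0" using up unfolding borel_upper_def by blast
  have nu: "mat_nilpotent u" using r unfolding regular_nilpotent_g_def by blast
  have cdu: "cdim (centralizer gl_full u) = CARD('n)" using r unfolding regular_nilpotent_g_def by blast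
  have diag: "u$i$i = 0" for i using up_nilp_diag[OF ul nu] .
  have strict: "\<forall>i j. u$i$j \<noteq> 0 \<longrightarrow> i < j"
    using ul diag by (metis linorder_neqE)
  have sd: "u$p$s \<noteq> 0" if ps: "p < s" and nb: "\<forall>k. \<not>(p < k \<and> k < s)" for p s
  proof
    assume z: "u$p$s = 0"
    have Ez: "\<forall>y. (\<forall>i j. y$i$j \<noteq> 0 \<longrightarrow> i \<le> j \<and> i \<in> UNIV \<and> j \<in> UNIV) \<longrightarrow>
       (\<forall>q\<in>{(p,s)}. (u**y - y**u) $ fst q $ snd q = 0)"
    proof (intro allI impI ballI)
      fix y :: "complex^('n::{finite,linorder})^('n::{finite,linorder})" and q
      assume yu: "\<forall>i j. y$i$j \<noteq> 0 \<longrightarrow> i \<le> j \<and> i \<in> UNIV \<and> j \<in> UNIV" and q: "q \<in> {(p,s)}"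
      have a: "(u ** y)$p$s = 0"
      proof (rule ccontr)
        assume "(u ** y)$p$s \<noteq> 0"
        then obtain l where l: "u$p$l \<noteq> 0" "y$l$s \<noteq> 0" using mm_nz by blast
        then have "p < l" "l \<le> s" using strict yu by auto
        then have "l = s" using nb by (metis order.not_eq_order_implies_strict)
        then show False using l z by simp
      qed
      have b: "(y ** u)$p$s = 0"
      proof (rule ccontr)
        assume "(y ** u)$p$s \<noteq> 0"
        then obtain l where l: "y$p$l \<noteq> 0" "u$l$s \<noteq> 0" using mm_nz by blast
        then have "p \<le> l" "l < s" using strict yu by auto
        then have "l = p" using nb by (metis order.not_eq_order_implies_strict)
        then show False using l z by simp
      qed
      show "(u**y - y**u) $ fst q $ snd q = 0" using q a b by simp
    qed
    have "card (UNIV::'n set) + card {(p,s)} \<le> cdim {y. (\<forall>i j. y$i$j \<noteq> 0 \<longrightarrow> i \<in> UNIV \<and> j \<in> UNIV) \<and> y ** u = u ** y}"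
      by (rule centralizer_lb) (use strict ps Ez in auto)
    moreover have "{y. (\<forall>i j. y$i$j \<noteq> 0 \<longrightarrow> i \<in> UNIV \<and> j \<in> UNIV) \<and> y ** u = u ** y} = centralizer gl_full u"
      unfolding centralizer_def gl_full_def by auto
    ultimately show False using cdu by simp
  qed
  define L where "L = (last_idx :: 'n)"
  have Lmax: "k \<le> L" for k unfolding L_def last_idx_def by simp
  define I where "I = UNIV - {L}"
  have cI: "card I = CARD('n) - 1" unfolding I_def by (simp add: card_Diff_singleton)
  then have Ine: "I \<noteq> {}" using N2 by auto
  define c where "c = Max I"
  have cinI: "c \<in> I" unfolding c_def using Ine by simp
  have cmax: "\<forall>k\<in>I. k \<le> c" unfolding c_def by simp
  define cu where "cu = corner u"
  have cu_e: "cu$i$j = (if i \<noteq> L \<and> j \<noteq> L then u$i$j else 0)" for i j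
    unfolding cu_def corner_def L_def by simp
  have cus: "\<forall>i j. cu$i$j \<noteq> 0 \<longrightarrow> i < j \<and> i \<in> I \<and> j \<in> I"
    using strict unfolding cu_e I_def by auto
  have cusd: "\<forall>i s. i \<in> I \<longrightarrow> s \<in> I \<longrightarrow> i < s \<longrightarrow> (\<forall>k\<in>I. \<not>(i < k \<and> k < s)) \<longrightarrow> cu$i$s \<noteq> 0"
  proof (intro allI impI)
    fix i s assume iI: "i \<in> I" and sI: "s \<in> I" and is': "i < s" and nb: "\<forall>k\<in>I. \<not>(i < k \<and> k < s)"
    have "\<forall>k. \<not>(i < k \<and> k < s)"
    proof (intro allI notI)
      fix k assume k: "i < k \<and> k < s"
      then have "k \<noteq> L" using Lmax[of s] by auto
      then have "k \<in> I" unfolding I_def by simp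
      then show False using nb k by blast
    qed
    then have "u$i$s \<noteq> 0" using sd is' by blast
    then show "cu$i$s \<noteq> 0" using iI sI unfolding cu_e I_def by simp
  qed
  have gl_iff: "y \<in> gl_corner \<longleftrightarrow> (\<forall>i j. y$i$j \<noteq> 0 \<longrightarrow> i \<in> I \<and> j \<in> I)" for y
    unfolding gl_corner_def I_def L_def by auto
  have Ceq: "centralizer gl_corner cu = {y. (\<forall>i j. y$i$j \<noteq> 0 \<longrightarrow> i \<in> I \<and> j \<in> I) \<and> y ** cu = cu ** y}"
    unfolding centralizer_def using gl_iff by auto
  have lb: "card I + card ({}::('n\<times>'n) set) \<le> cdim (centralizer gl_corner cu)"
    unfolding Ceq by (rule centralizer_lb) (use cus in auto)
  have inj_c: "y = 0" if yC: "y \<in> centralizer gl_corner cu" and yc: "\<forall>k. y$k$c = 0" for y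
  proof -
    have y: "y \<in> gl_corner" "y ** cu = cu ** y" using yC unfolding centralizer_def by auto
    have "\<forall>i\<in>I. \<forall>k. y$k$i = 0"
      by (rule cyclic_core[OF cus cusd cinI cmax]) (use y yc in auto)
    moreover have "y$k$L = 0" for k using y(1) unfolding gl_corner_def L_def by simp
    ultimately show "y = 0" unfolding I_def by (auto simp: vec_eq_iff)
  qed
  define G where "G = (\<lambda>v::complex^('n\<times>'n). \<chi> k. v $ (k, c))"
  have linG: "Vector_Spaces.linear (*s) (*s) G"
  proof -
    have vs1: "vector_space ((*s) :: complex \<Rightarrow> complex^('n\<times>'n) \<Rightarrow> _)" by (rule vec.vector_space_axioms)
    have vs2: "vector_space ((*s) :: complex \<Rightarrow> complex^('n::{finite,linorder}) \<Rightarrow> _)" by (rule vec.vector_space_axioms)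
    show ?thesis unfolding Vector_Spaces.linear_iff G_def using vs1 vs2 by (simp add: vec_eq_iff)
  qed
  define S where "S = flat_mat ` centralizer gl_corner cu"
  have subS: "vec.subspace S" unfolding S_def by (rule cent_sub_flat)
  have injG: "inj_on G (vec.span S)"
  proof -
    have sp: "vec.span S = S" by (rule vec.span_eq_iff[THEN iffD2, OF subS])
    have injS: "inj_on G S"
    proof (rule inj_onI)
      fix v w assume v: "v \<in> S" and w: "w \<in> S" and e: "G v = G w"
      obtain y1 y2 where y: "y1 \<in> centralizer gl_corner cu" "y2 \<in> centralizer gl_corner cu"
        "v = flat_mat y1" "w = flat_mat y2" using v w unfolding S_def by blast
      have "y1 - y2 \<in> centralizer gl_corner cu"
        using y unfolding centralizer_def gl_corner_def by (auto simp: mat_sub_ldistrib mat_sub_rdistrib)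
      moreover have "\<forall>k. (y1 - y2)$k$c = 0"
        using e y unfolding G_def flat_mat_def by (auto simp: vec_eq_iff)
      ultimately have "y1 - y2 = 0" using inj_c by blast
      then show "v = w" using y by simp
    qed
    show ?thesis unfolding sp by (rule injS)
  qed
  have "cdim (centralizer gl_corner cu) = vec.dim (G ` S)"
    unfolding cdim_def S_def[symmetric] using vec.dim_image_eq[OF linG injG] by simp
  also have "\<dots> \<le> vec.dim {w::complex^('n::{finite,linorder}). \<forall>k. k \<notin> I \<longrightarrow> w$k = 0}"
  proof (rule vec.dim_subset, rule subsetI)
    fix w assume "w \<in> G ` S"
    then obtain y where y: "y \<in> centralizer gl_corner cu" "w = G (flat_mat y)" unfolding S_def by blast
    then have "y \<in> gl_corner" unfolding centralizer_def by simp
    then show "w \<in> {w::complex^('n::{finite,linorder}). \<forall>k. k \<notin> I \<longrightarrow> w$k = 0}"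
      using y(2) unfolding G_def flat_mat_def gl_corner_def I_def L_def by simp
  qed
  also have "\<dots> = card I" by (rule dim_substandard_cart)
  finally have ub: "cdim (centralizer gl_corner cu) \<le> card I" .
  have reg: "regular_nilpotent_gn cu"
    unfolding regular_nilpotent_gn_def
    using corner_in[of u] strict_nilp[of cu] cus lb ub cI unfolding cu_def by auto
  have cent0: "y = 0" if "y \<in> gl_corner" "y ** u = u ** y" for y
  proof -
    have sd': "\<forall>i s. i \<in> UNIV \<longrightarrow> s \<in> UNIV \<longrightarrow> i < s \<longrightarrow> (\<forall>k\<in>UNIV. \<not>(i < k \<and> k < s)) \<longrightarrow> u$i$s \<noteq> 0"
      using sd by blast
    have "\<forall>i\<in>UNIV. \<forall>k. y$k$i = 0"
      by (rule cyclic_core[OF _ sd', of L]) (use strict Lmax that in \<open>auto simp: gl_corner_def L_def\<close>)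
    then show ?thesis by (simp add: vec_eq_iff)
  qed
  show ?thesis using reg cent0 unfolding cu_def by blast
qed

lemma tri_main:
  fixes u :: "complex^('n::{finite,linorder})^('n::{finite,linorder})"
  assumes N2: "CARD('n) \<ge> 2" and ut: "u \<in> borel_upper \<or> u \<in> borel_lower" and r: "regular_nilpotent_g u"
  shows "regular_nilpotent_gn (corner u) \<and> (\<forall>y. y \<in> gl_corner \<longrightarrow> y ** u = u ** y \<longrightarrow> y = 0)"
  using ut
proof
  assume "u \<in> borel_upper" then show ?thesis using upper_main[OF N2 _ r] by blast
next
  assume lo: "u \<in> borel_lower"
  have "transpose u \<in> borel_upper" using lo unfolding borel_lower_def borel_upper_def by (simp add: transpose_def)
  then have M: "regular_nilpotent_gn (corner (transpose u))"
    "\<And>y. y \<in> gl_corner \<Longrightarrow> y ** transpose u = transpose u ** y \<Longrightarrow> y = 0"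
    using upper_main[OF N2 _ reg_g_transpose[OF r]] by blast+
  have "regular_nilpotent_gn (transpose (transpose (corner u)))"
    using reg_gn_transpose M(1) corner_transpose by metis
  then have A: "regular_nilpotent_gn (corner u)" by simp
  have B: "y = 0" if y: "y \<in> gl_corner" "y ** u = u ** y" for y
  proof -
    have "transpose y \<in> gl_corner" using y gl_corner_transpose by blast
    moreover have "transpose y ** transpose u = transpose u ** transpose y"
      using y(2) by (metis matrix_transpose_mul)
    ultimately have "transpose y = 0" using M(2) by blast
    then show ?thesis by (metis transpose_transpose transpose_zero)
  qed
  show ?thesis using A B by blast
qed

theorem proposition3p11:
  fixes x :: "complex^('n::{finite,linorder})^('n::{finite,linorder})"
  assumes "CARD('n) \<ge> 2"
    and "regular_nilpotent_g x"
    and "\<exists>b \<in> Q_plus \<union> Q_minus. x \<in> b"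
  shows "regular_nilpotent_gn (corner x)
    \<and> centralizer gl_corner (corner x) \<inter> centralizer gl_full x = {0}"
proof -
  obtain k u where k: "k \<in> K_grp" and xe: "x = k ** u ** matrix_inv k"
    and ut: "u \<in> borel_upper \<or> u \<in> borel_lower"
    using assms(3) unfolding Q_plus_def Q_minus_def by blast
  define ki where "ki = matrix_inv k"
  have inv: "invertible k" using k unfolding K_grp_def by simp
  have e: "k ** ki = mat 1 \<and> ki ** k = mat 1"
    unfolding ki_def matrix_inv_def using inv[unfolded invertible_def] by (rule someI_ex)
  then have e1: "k ** ki = mat 1" and e2: "ki ** k = mat 1" by auto
  have bk: "blk k" using k unfolding K_grp_def blk_def by auto
  have bki: "blk ki" by (rule blk_inv[OF bk e1 e2])
  have x2: "x = k ** u ** ki" using xe ki_def by simp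
  have ru: "regular_nilpotent_g u" using reg_g_conj[OF e1 e2] assms(2) x2 by simp
  have M: "regular_nilpotent_gn (corner u)" "\<And>y. y \<in> gl_corner \<Longrightarrow> y ** u = u ** y \<Longrightarrow> y = 0"
    using tri_main[OF assms(1) ut ru] by blast+
  have A: "regular_nilpotent_gn (corner x)" using reg_gn_conj[OF e1 e2 bk bki M(1)] x2 by simp
  have B: "y = 0" if y: "y \<in> centralizer gl_corner (corner x) \<inter> centralizer gl_full x" for y
  proof -
    have y1: "y \<in> gl_corner" and y2: "y ** (k ** u ** ki) = (k ** u ** ki) ** y"
      using y x2 unfolding centralizer_def by auto
    have "ki ** y ** k \<in> gl_corner"
      using y1 corner_conj[OF bki bk, of y] by (simp add: gl_corner_iff)
    moreover have "(ki ** y ** k) ** u = u ** (ki ** y ** k)" using y2 conj_comm_iff[OF e1 e2] by blast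
    ultimately have "ki ** y ** k = 0" using M(2) by blast
    then have "k ** (ki ** y ** k) ** ki = 0" by simp
    then show "y = 0" using conj_cancel(2)[OF e1 e2] by simp
  qed
  have "0 \<in> centralizer gl_corner (corner x) \<inter> centralizer gl_full x"
    unfolding centralizer_def gl_corner_def gl_full_def by simp
  then have "centralizer gl_corner (corner x) \<inter> centralizer gl_full x = {0}" using B by blast
  then show ?thesis using A by blast
qed

end
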